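(* Assume $\|\hat F'(y)-\hat F'(x)\|_F\le L_{\hat F}\|y-x\|$ for all $x,y\in\mathcal F$. Let $x\in\mathcal F$, $\tau>0$, $L\ge L_{\hat F}$, and suppose $T_{L,\tau}(x)\in\mathcal F$. Then $$\frac\tau2+\frac{\hat f_2(x)}{2\tau}-\hat f_1(T_{L,\tau}(x))\ge\frac L2\|T_{L,\tau}(x)-x\|^2.$$
   Context: Let $F:\mathbb R^n\to\mathbb R^m$ be smooth, $\hat F=\frac1{\sqrt m}F$ with Jacobian $\hat F'(x)$; Euclidean norms, $\|\cdot\|_F$ Frobenius norm; $\mathcal F\subseteq\mathbb R^n$ closed convex with nonempty interior. $\hat f_1(x)=\|\hat F(x)\|$, $\hat f_2=\hat f_1^2$, $\psi_{x,L,\tau}(y)=\frac\tau2+\frac1{2\tau}\|\hat F(x)+\hat F'(x)(y-x)\|^2+\frac L2\|y-x\|^2$, and $T_{L,\tau}(x)=\arg\min_{y\in\mathbb R^n}\psi_{x,L,\tau}(y)$. *)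

theory Defs
  imports "HOL-Analysis.Analysis"
begin

definition Fhat :: "(real^'n \<Rightarrow> real^'m) \<Rightarrow> real^'n \<Rightarrow> real^'m" where
  "Fhat F x = (1 / sqrt (real CARD('m))) *\<^sub>R F x"

text \<open>Scaled Jacobian: Fhat' = F' / sqrt m (J x is the m x n Jacobian matrix of F at x).\<close>
definition Fhat' :: "(real^'n \<Rightarrow> real^'n^'m) \<Rightarrow> real^'n \<Rightarrow> real^'n^'m" where
  "Fhat' J x = (1 / sqrt (real CARD('m))) *\<^sub>R J x"

definition frob_norm :: "real^'n^'m \<Rightarrow> real" where
  "frob_norm A = sqrt (\<Sum>i\<in>UNIV. \<Sum>j\<in>UNIV. (A $ i $ j)\<^sup>2)"

definition fhat1 :: "(real^'n \<Rightarrow> real^'m) \<Rightarrow> real^'n \<Rightarrow> real" where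
  "fhat1 F x = norm (Fhat F x)"

definition fhat2 :: "(real^'n \<Rightarrow> real^'m) \<Rightarrow> real^'n \<Rightarrow> real" where
  "fhat2 F x = (fhat1 F x)\<^sup>2"

definition psi :: "(real^'n \<Rightarrow> real^'m) \<Rightarrow> (real^'n \<Rightarrow> real^'n^'m)
    \<Rightarrow> real^'n \<Rightarrow> real \<Rightarrow> real \<Rightarrow> real^'n \<Rightarrow> real" where
  "psi F J x L \<tau> y = \<tau> / 2 + (1 / (2 * \<tau>)) * (norm (Fhat F x + Fhat' J x *v (y - x)))\<^sup>2
                     + (L / 2) * (norm (y - x))\<^sup>2"

definition T_argmin :: "(real^'n \<Rightarrow> real^'m) \<Rightarrow> (real^'n \<Rightarrow> real^'n^'m)
    \<Rightarrow> real \<Rightarrow> real \<Rightarrow> real^'n \<Rightarrow> (real^'n) set" where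
  "T_argmin F J L \<tau> x = {y. \<forall>z. psi F J x L \<tau> y \<le> psi F J x L \<tau> z}"

end

theory Submission
  imports Defs
begin

lemma normsq_vec: "(norm (x::real^'k))^2 = (\<Sum>i\<in>UNIV. (x$i)^2)"
  by (simp add: norm_vec_def L2_set_def sum_nonneg)

lemma frob_bound:
  fixes A :: "real^'n^'m"
  shows "norm (A *v v) \<le> frob_norm A * norm v"
proof -
  have row: "(A *v v)$i = A$i \<bullet> v" for i
    by (simp add: matrix_vector_mult_def inner_vec_def)
  have "(norm (A *v v))^2 = (\<Sum>i\<in>UNIV. ((A *v v)$i)^2)" by (rule normsq_vec)
  also have "\<dots> \<le> (\<Sum>i\<in>UNIV. (norm (A$i))^2 * (norm v)^2)"
  proof (rule sum_mono)
    fix i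
    have "\<bar>A$i \<bullet> v\<bar> \<le> norm (A$i) * norm v" by (rule Cauchy_Schwarz_ineq2)
    hence "(A$i \<bullet> v)^2 \<le> (norm (A$i) * norm v)^2"
      by (metis abs_ge_zero power2_abs power_mono)
    thus "((A *v v)$i)^2 \<le> (norm (A$i))^2 * (norm v)^2" by (simp add: row power_mult_distrib)
  qed
  also have "\<dots> = (frob_norm A * norm v)^2"
    by (simp add: frob_norm_def power_mult_distrib normsq_vec sum_distrib_right sum_nonneg)
  finally show ?thesis
    by (rule power2_le_imp_le) (simp add: frob_norm_def sum_nonneg)
qed

lemma Fhat_deriv:
  fixes F :: "real^'n \<Rightarrow> real^'m" and J :: "real^'n \<Rightarrow> real^'n^'m"
  assumes "(F has_derivative (\<lambda>h. J z *v h)) (at z)"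
  shows "(Fhat F has_derivative (\<lambda>h. Fhat' J z *v h)) (at z)"
proof -
  have "((\<lambda>y. (1 / sqrt (real CARD('m))) *\<^sub>R (F y :: real^'m)) has_derivative
      (\<lambda>h. (1 / sqrt (real CARD('m))) *\<^sub>R (J z *v h))) (at z)"
    using assms by (intro derivative_intros)
  thus ?thesis unfolding Fhat_def[abs_def] Fhat'_def by (simp add: scaleR_matrix_vector_assoc)
qed

lemma phi_deriv:
  fixes F :: "real^'n \<Rightarrow> real^'m" and J :: "real^'n \<Rightarrow> real^'n^'m"
  assumes "\<And>z. (F has_derivative (\<lambda>h. J z *v h)) (at z)"
  shows "((\<lambda>t. u \<bullet> Fhat F (x + t *\<^sub>R d)) has_real_derivative (u \<bullet> (Fhat' J (x + t *\<^sub>R d) *v d))) (at t)"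
proof -
  have g: "((\<lambda>t. x + t *\<^sub>R d) has_derivative (\<lambda>h. h *\<^sub>R d)) (at t)"
    by (auto intro!: derivative_eq_intros)
  have c: "((\<lambda>t. Fhat F (x + t *\<^sub>R d)) has_derivative (\<lambda>h. Fhat' J (x + t *\<^sub>R d) *v (h *\<^sub>R d))) (at t)"
    using has_derivative_compose[OF g Fhat_deriv[where z="x + t *\<^sub>R d" and F=F and J=J, OF assms[of "x + t *\<^sub>R d"]]] by (simp add: o_def)
  have "((\<lambda>t. u \<bullet> Fhat F (x + t *\<^sub>R d)) has_derivative (\<lambda>h. u \<bullet> (Fhat' J (x + t *\<^sub>R d) *v (h *\<^sub>R d)))) (at t)"
    by (rule has_derivative_inner_right[OF c])
  moreover have "(\<lambda>h. u \<bullet> (Fhat' J (x + t *\<^sub>R d) *v (h *\<^sub>R d))) = (*) (u \<bullet> (Fhat' J (x + t *\<^sub>R d) *v d))"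
    by (auto simp: fun_eq_iff matrix_vector_mult_scaleR)
  ultimately show ?thesis unfolding has_field_derivative_def by simp
qed

lemma taylor:
  fixes F :: "real^'n \<Rightarrow> real^'m" and J :: "real^'n \<Rightarrow> real^'n^'m"
  assumes deriv: "\<And>z. (F has_derivative (\<lambda>h. J z *v h)) (at z)"
    and cvx: "convex S"
    and lip: "\<And>x y. x \<in> S \<Longrightarrow> y \<in> S \<Longrightarrow>
                frob_norm (Fhat' J y - Fhat' J x) \<le> LF * norm (y - x)"
    and xS: "x \<in> S" and yS: "y \<in> S"
  shows "norm (Fhat F y - Fhat F x - Fhat' J x *v (y - x)) \<le> LF / 2 * (norm (y - x))^2"
proof -
  define d where "d = y - x"
  define A where "A = Fhat' J x"
  define e where "e = Fhat F y - Fhat F x - A *v d"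
  have fn0: "0 \<le> frob_norm M" for M :: "real^'n^'m" by (simp add: frob_norm_def sum_nonneg)
  have LFd: "0 \<le> LF * norm d" using lip[OF xS yS] fn0[of "Fhat' J y - Fhat' J x"] by (simp add: d_def)
  have rhs0: "0 \<le> LF / 2 * (norm d)^2"
    using mult_nonneg_nonneg[OF LFd norm_ge_zero[of d]] by (simp add: power2_eq_square mult.assoc)
  show ?thesis
  proof (cases "e = 0")
    case True
    thus ?thesis using rhs0 by (simp add: e_def A_def d_def)
  next
    case False
    define u where "u = (1 / norm e) *\<^sub>R e"
    have ue: "u \<bullet> e = norm e" using False
      by (simp add: u_def power2_norm_eq_inner[symmetric] power2_eq_square)
    have nu: "norm u = 1" using False by (simp add: u_def)
    define \<phi> where "\<phi> t = u \<bullet> Fhat F (x + t *\<^sub>R d) - t * (u \<bullet> (A *v d)) - LF / 2 * t^2 * (norm d)^2" for t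
    define \<phi>' where "\<phi>' t = u \<bullet> (Fhat' J (x + t *\<^sub>R d) *v d) - u \<bullet> (A *v d) - LF * t * (norm d)^2" for t
    have D: "DERIV \<phi> t :> \<phi>' t" for t
      unfolding \<phi>_def[abs_def] \<phi>'_def
      by (rule phi_deriv[OF deriv] derivative_eq_intros | simp)+
    obtain z where z: "0 < z" "z < 1" "\<phi> 1 - \<phi> 0 = (1 - 0) * \<phi>' z"
      using MVT2[of 0 1 \<phi> \<phi>'] D by auto
    have zS: "x + z *\<^sub>R d \<in> S"
    proof -
      have "(1 - z) *\<^sub>R x + z *\<^sub>R y \<in> S" using convexD[OF cvx xS yS] z by auto
      moreover have "(1 - z) *\<^sub>R x + z *\<^sub>R y = x + z *\<^sub>R d" by (simp add: d_def algebra_simps)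
      ultimately show ?thesis by simp
    qed
    have "\<phi>' z = u \<bullet> ((Fhat' J (x + z *\<^sub>R d) - A) *v d) - LF * z * (norm d)^2"
      by (simp add: \<phi>'_def matrix_vector_mult_diff_rdistrib inner_diff_right)
    also have "\<dots> \<le> norm ((Fhat' J (x + z *\<^sub>R d) - A) *v d) - LF * z * (norm d)^2"
      using Cauchy_Schwarz_ineq2[of u "(Fhat' J (x + z *\<^sub>R d) - A) *v d"] nu by simp
    also have "\<dots> \<le> frob_norm (Fhat' J (x + z *\<^sub>R d) - A) * norm d - LF * z * (norm d)^2"
      using frob_bound by simp
    also have "\<dots> \<le> LF * norm (z *\<^sub>R d) * norm d - LF * z * (norm d)^2"
      using lip[OF xS zS] by (simp add: A_def mult_right_mono)
    also have "\<dots> = 0" using z by (simp add: power2_eq_square)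
    finally have "\<phi> 1 - \<phi> 0 \<le> 0" using z by simp
    hence "u \<bullet> e \<le> LF / 2 * (norm d)^2"
      by (simp add: \<phi>_def e_def inner_diff_right d_def)
    thus ?thesis using ue by (simp add: e_def A_def d_def)
  qed
qed


lemma quad_zero:
  fixes b c :: real
  assumes "\<And>t. 0 \<le> b * t + c * t^2"
  shows "b = 0"
proof (rule ccontr)
  assume b: "b \<noteq> 0"
  show False
  proof (cases "c \<le> 0")
    case True
    have "0 \<le> b * (-b) + c * (-b)^2" by (rule assms)
    moreover have "c * (-b)^2 \<le> 0" using True by (simp add: mult_nonpos_nonneg)
    moreover have "b * (-b) < 0" using b by (simp add: power2_eq_square[symmetric])
    ultimately show False by linarith
  next
    case False
    hence c: "c > 0" by simp
    have "0 \<le> b * (-b/(2*c)) + c * (-b/(2*c))^2" by (rule assms)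
    also have "\<dots> = - (b^2 / (4*c))" using c by (simp add: field_simps power2_eq_square)
    finally show False using b c by (simp add: divide_le_0_iff)
  qed
qed

theorem lemma2:
  fixes F :: "real^'n \<Rightarrow> real^'m"
    and J :: "real^'n \<Rightarrow> real^'n^'m"
    and \<F> :: "(real^'n) set"
    and LF L \<tau> :: real
    and x T :: "real^'n"
  assumes deriv: "\<And>z. (F has_derivative (\<lambda>h. J z *v h)) (at z)"
    and F_closed: "closed \<F>" and F_convex: "convex \<F>" and F_int: "interior \<F> \<noteq> {}"
    and lip: "\<And>x y. x \<in> \<F> \<Longrightarrow> y \<in> \<F> \<Longrightarrow>
                frob_norm (Fhat' J y - Fhat' J x) \<le> LF * norm (y - x)"
    and x_in: "x \<in> \<F>"
    and tau_pos: "\<tau> > 0"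
    and L_ge: "L \<ge> LF"
    and T_min: "T \<in> T_argmin F J L \<tau> x"
    and T_in: "T \<in> \<F>"
  shows "\<tau> / 2 + fhat2 F x / (2 * \<tau>) - fhat1 F T \<ge> (L / 2) * (norm (T - x))\<^sup>2"
proof -
  define d where "d = x - T"
  define A where "A = Fhat' J x"
  define r where "r = Fhat F x + A *v (T - x)"
  define a where "a = r \<bullet> (A *v d)"
  define p where "p = (norm (A *v d))^2"
  define R where "R = (norm r)^2"
  define D where "D = (norm d)^2"
  have min: "psi F J x L \<tau> T \<le> psi F J x L \<tau> z" for z
    using T_min by (simp add: T_argmin_def)
  have psiT: "psi F J x L \<tau> T = \<tau>/2 + R/(2*\<tau>) + L/2 * D"
    by (simp add: psi_def R_def r_def A_def D_def d_def norm_minus_commute)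
  have psit: "psi F J x L \<tau> (T + t *\<^sub>R d) = \<tau>/2 + (R + 2*t*a + t^2*p)/(2*\<tau>) + L/2 * (t - 1)^2 * D" for t
  proof -
    have e1: "Fhat F x + Fhat' J x *v (T + t *\<^sub>R d - x) = r + t *\<^sub>R (A *v d)"
      by (simp add: r_def A_def matrix_vector_right_distrib matrix_vector_mult_scaleR algebra_simps)
    have e2: "(norm (r + t *\<^sub>R (A *v d)))^2 = R + 2*t*a + t^2*p"
      unfolding R_def a_def p_def power2_norm_eq_inner
      by (simp add: inner_add_left inner_add_right inner_commute power2_eq_square algebra_simps)
    have e3: "T + t *\<^sub>R d - x = (t - 1) *\<^sub>R d" by (simp add: d_def algebra_simps)
    have e4: "(norm (T + t *\<^sub>R d - x))^2 = (t - 1)^2 * D"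
      unfolding e3 by (simp add: D_def power_mult_distrib)
    show ?thesis unfolding psi_def e1 e2 e4 by (simp add: mult.assoc)
  qed
  define b where "b = a/\<tau> - L*D"
  define c where "c = p/(2*\<tau>) + L*D/2"
  have diff: "psi F J x L \<tau> (T + t *\<^sub>R d) - psi F J x L \<tau> T = b*t + c*t^2" for t
    unfolding psit psiT b_def c_def using tau_pos
    by (simp add: field_simps power2_eq_square)
  have "b = 0"
    by (rule quad_zero[of b c]) (use diff min in smt)
  have p0: "0 \<le> p/(2*\<tau>)" using tau_pos by (simp add: p_def)
  have psix: "psi F J x L \<tau> x = \<tau>/2 + fhat2 F x / (2*\<tau>)"
    by (simp add: psi_def fhat2_def fhat1_def)
  have "psi F J x L \<tau> x - psi F J x L \<tau> T = b + c"
    using diff[of 1] by (simp add: d_def)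
  hence key: "psi F J x L \<tau> x - psi F J x L \<tau> T \<ge> L/2 * D"
    using \<open>b = 0\<close> p0 by (simp add: c_def)
  have amgm: "\<tau>/2 + R/(2*\<tau>) \<ge> norm r"
  proof -
    have "0 \<le> (\<tau> - norm r)^2 / (2*\<tau>)" using tau_pos by simp
    also have "\<dots> = \<tau>/2 + R/(2*\<tau>) - norm r" using tau_pos
      by (simp add: R_def field_simps power2_eq_square)
    finally show ?thesis by simp
  qed
  have tay: "norm (Fhat F T - r) \<le> LF/2 * D"
    using taylor[OF deriv F_convex lip x_in T_in]
    by (simp add: r_def A_def D_def d_def norm_minus_commute algebra_simps)
  have "fhat1 F T \<le> norm r + norm (Fhat F T - r)"
    unfolding fhat1_def by (metis norm_triangle_sub)
  also have "\<dots> \<le> norm r + L/2 * D"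
    using tay L_ge mult_right_mono[OF L_ge, of D] by (simp add: D_def)
  also have "\<dots> \<le> psi F J x L \<tau> T" using amgm psiT by simp
  finally show ?thesis using key psix by (simp add: D_def d_def norm_minus_commute)
qed

end
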